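(* Let $G$ be a finite bipartite graph and let $H$ be a $2$-lift of $G$. Then for every $k\geq0$, $$m_k(G\cup G)\geq m_k(H),$$ where $G\cup G$ is the disjoint union of two copies of $G$. In particular, for every $t\geq0$, $M(G,t)^2\geq M(H,t)$.
   Context: $m_k(\cdot)$ denotes the number of matchings of size $k$ and $M(G,t)=\sum_k m_k(G)t^k$. A graph $H$ is a $2$-lift of $G$ if $V(H)=V(G)\times\{0,1\}$ and for every edge $(u,v)\in E(G)$ exactly one of the following holds: $((u,0),(v,0))$ and $((u,1),(v,1))$ are edges of $H$, or $((u,0),(v,1))$ and $((u,1),(v,0))$ are edges of $H$; and if $(u,v)\notin E(G)$ then none of these four pairs is an edge of $H$. *)

theory Defs
  imports Complex_Main
begin

definition simple_graph :: "'a set \<Rightarrow> 'a set set \<Rightarrow> bool" where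
  "simple_graph V E \<longleftrightarrow> finite V \<and>
     (\<forall>e\<in>E. \<exists>u v. u \<in> V \<and> v \<in> V \<and> u \<noteq> v \<and> e = {u, v})"

definition bipartite :: "'a set \<Rightarrow> 'a set set \<Rightarrow> bool" where
  "bipartite V E \<longleftrightarrow> (\<exists>A. A \<subseteq> V \<and> (\<forall>u v. {u, v} \<in> E \<longrightarrow> (u \<in> A \<longleftrightarrow> v \<notin> A)))"

definition matching :: "'a set set \<Rightarrow> 'a set set \<Rightarrow> bool" where
  "matching E M \<longleftrightarrow> M \<subseteq> E \<and> (\<forall>e\<in>M. \<forall>f\<in>M. e \<noteq> f \<longrightarrow> e \<inter> f = {})"

definition num_matchings :: "'a set set \<Rightarrow> nat \<Rightarrow> nat" where
  "num_matchings E k = card {M. matching E M \<and> card M = k}"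

text \<open>Matching polynomial M(G,t) = sum_k m_k(G) t^k (m_k = 0 for k > |E|).\<close>
definition matching_poly :: "'a set set \<Rightarrow> real \<Rightarrow> real" where
  "matching_poly E t = (\<Sum>k\<le>card E. real (num_matchings E k) * t ^ k)"

definition two_lift :: "'a set \<Rightarrow> 'a set set \<Rightarrow> ('a \<times> bool) set set \<Rightarrow> bool" where
  "two_lift V E EH \<longleftrightarrow>
     (\<forall>e\<in>EH. \<exists>u v i j. u \<in> V \<and> v \<in> V \<and> e = {(u, i), (v, j)}) \<and>
     (\<forall>u\<in>V. \<forall>v\<in>V.
        ({u, v} \<in> E \<longrightarrow>
           (({(u,False),(v,False)} \<in> EH \<and> {(u,True),(v,True)} \<in> EH \<and>
             {(u,False),(v,True)} \<notin> EH \<and> {(u,True),(v,False)} \<notin> EH) \<or>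
            ({(u,False),(v,True)} \<in> EH \<and> {(u,True),(v,False)} \<in> EH \<and>
             {(u,False),(v,False)} \<notin> EH \<and> {(u,True),(v,True)} \<notin> EH))) \<and>
        ({u, v} \<notin> E \<longrightarrow>
           {(u,False),(v,False)} \<notin> EH \<and> {(u,True),(v,True)} \<notin> EH \<and>
           {(u,False),(v,True)} \<notin> EH \<and> {(u,True),(v,False)} \<notin> EH))"

definition double_graph :: "'a set set \<Rightarrow> ('a \<times> bool) set set" where
  "double_graph E = {(\<lambda>x. (x, i)) ` e | e i. e \<in> E}"

end

theory Submission
  imports Defs
begin


definition D3 :: "'e set \<Rightarrow> ('e \<Rightarrow> 'v) \<Rightarrow> bool" where
  "D3 F a \<longleftrightarrow> (\<forall>e1\<in>F. \<forall>e2\<in>F. \<forall>e3\<in>F. e1 \<noteq> e2 \<longrightarrow> e1 \<noteq> e3 \<longrightarrow> e2 \<noteq> e3 \<longrightarrow> a e1 = a e2 \<longrightarrow> a e1 \<noteq> a e3)"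

definition PC :: "'e set \<Rightarrow> ('e \<Rightarrow> 'v) \<Rightarrow> ('e \<Rightarrow> 'v) \<Rightarrow> ('e \<Rightarrow> bool) \<Rightarrow> bool" where
  "PC F a b col \<longleftrightarrow> (\<forall>e\<in>F. \<forall>e'\<in>F. e \<noteq> e' \<longrightarrow> a e = a e' \<or> b e = b e' \<longrightarrow> col e \<noteq> col e')"

lemma D3_mono: "D3 F a \<Longrightarrow> G \<subseteq> F \<Longrightarrow> D3 G a"
  unfolding D3_def by blast

lemma D3E: "D3 F a \<Longrightarrow> e1 \<in> F \<Longrightarrow> e2 \<in> F \<Longrightarrow> e3 \<in> F \<Longrightarrow> e1 \<noteq> e2 \<Longrightarrow> e1 \<noteq> e3 \<Longrightarrow> e2 \<noteq> e3
  \<Longrightarrow> a e1 = a e2 \<Longrightarrow> a e1 = a e3 \<Longrightarrow> False"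
  unfolding D3_def by blast

lemma PC_swap: "PC F a b col = PC F b a col"
  unfolding PC_def by blast

lemma colour_step:
  fixes F :: "'e set" and a b :: "'e \<Rightarrow> 'v"
  assumes IH: "\<And>F' (a'::'e \<Rightarrow> 'v) b'. F' \<subset> F \<Longrightarrow> D3 F' a' \<Longrightarrow> D3 F' b' \<Longrightarrow> \<exists>col. PC F' a' b' col"
    and Da: "D3 F a" and Db: "D3 F b" and e1: "e1 \<in> F" and e2: "e2 \<in> F" and ne: "e1 \<noteq> e2"
    and aeq: "a e1 = a e2"
  shows "\<exists>col. PC F a b col"
proof -
  define F' where "F' = F - {e1, e2}"
  have sub: "F' \<subset> F" using e1 unfolding F'_def by blast
  have noa: "\<And>e. e \<in> F' \<Longrightarrow> a e \<noteq> a e1"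
  proof
    fix e assume "e \<in> F'" "a e = a e1"
    then show False using D3E[OF Da e1 e2, of e] ne aeq unfolding F'_def by auto
  qed
  show ?thesis
  proof (cases "b e1 = b e2")
    case True
    have nob: "\<And>e. e \<in> F' \<Longrightarrow> b e \<noteq> b e1"
    proof
      fix e assume "e \<in> F'" "b e = b e1"
      then show False using D3E[OF Db e1 e2, of e] ne True unfolding F'_def by auto
    qed
    obtain col' where c': "PC F' a b col'"
      using IH[OF sub D3_mono[OF Da psubset_imp_subset[OF sub]] D3_mono[OF Db psubset_imp_subset[OF sub]]] by blast
    define col where "col = col'(e1 := True, e2 := False)"
    have "PC F a b col"
      unfolding PC_def
    proof (intro ballI impI)
      fix e e' assume "e \<in> F" "e' \<in> F" "e \<noteq> e'" "a e = a e' \<or> b e = b e'"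
      note ee = this
      have FF: "F = F' \<union> {e1, e2}" using e1 e2 unfolding F'_def by blast
      have in4: "\<And>x y. x \<in> F' \<Longrightarrow> y \<in> F' \<Longrightarrow> x \<noteq> y \<Longrightarrow> a x = a y \<or> b x = b y \<Longrightarrow> col x \<noteq> col y"
        using c' unfolding PC_def col_def F'_def by auto
      have c12: "col e1 \<noteq> col e2" using ne unfolding col_def by auto
      consider "e \<in> F'" "e' \<in> F'" | "e \<in> F'" "e' = e1 \<or> e' = e2" | "e' \<in> F'" "e = e1 \<or> e = e2"
        | "e = e1" "e' = e2" | "e = e2" "e' = e1" using ee FF by blast
      then show "col e \<noteq> col e'"
      proof cases
        case 1 then show ?thesis using in4 ee by blast
      next
        case 2
        then have "a e \<noteq> a e'" "b e \<noteq> b e'" using noa nob aeq True by auto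
        then show ?thesis using ee(4) by simp
      next
        case 3
        then have "a e' \<noteq> a e" "b e' \<noteq> b e" using noa nob aeq True by auto
        then show ?thesis using ee(4) by simp
      next
        case 4 then show ?thesis using c12 by simp
      next
        case 5 then show ?thesis using c12 by simp
      qed
    qed
    then show ?thesis by blast
  next
    case False
    define b' where "b' = (\<lambda>e. if b e = b e2 then b e1 else b e)"
    have uniq1: "\<And>w w'. w \<in> F' \<Longrightarrow> w' \<in> F' \<Longrightarrow> b w = b e1 \<Longrightarrow> b w' = b e1 \<Longrightarrow> w = w'"
      using D3E[OF Db e1] unfolding F'_def by fastforce
    have uniq2: "\<And>w w'. w \<in> F' \<Longrightarrow> w' \<in> F' \<Longrightarrow> b w = b e2 \<Longrightarrow> b w' = b e2 \<Longrightarrow> w = w'"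
      using D3E[OF Db e2] unfolding F'_def by fastforce
    have Db': "D3 F' b'"
      unfolding D3_def
    proof (intro ballI impI)
      fix x y z assume xyz: "x \<in> F'" "y \<in> F'" "z \<in> F'" "x \<noteq> y" "x \<noteq> z" "y \<noteq> z" "b' x = b' y"
      show "b' x \<noteq> b' z"
      proof
        assume xz: "b' x = b' z"
        show False
        proof (cases "b' x = b e1")
          case True
          then have "b x = b e1 \<or> b x = b e2" "b y = b e1 \<or> b y = b e2" "b z = b e1 \<or> b z = b e2"
            using xyz xz unfolding b'_def by (auto split: if_splits)
          then show False using uniq1 uniq2 xyz by metis
        next
          case c2: False
          then have "b x = b' x" "b y = b' y" "b z = b' z"
            using xyz xz unfolding b'_def by (auto split: if_splits)
          then show False using D3E[OF Db, of x y z] xyz xz unfolding F'_def by auto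
        qed
      qed
    qed
    obtain col' where c': "PC F' a b' col'"
      using IH[OF sub D3_mono[OF Da psubset_imp_subset[OF sub]] Db'] by blast
    define c1 where "c1 = (if \<exists>f\<in>F'. b f = b e1 then \<not> col' (SOME f. f \<in> F' \<and> b f = b e1)
          else if \<exists>g\<in>F'. b g = b e2 then col' (SOME g. g \<in> F' \<and> b g = b e2) else True)"
    define col where "col = col'(e1 := c1, e2 := \<not> c1)"
    have h1: "\<And>e. e \<in> F' \<Longrightarrow> b e = b e1 \<Longrightarrow> col e \<noteq> col e1"
    proof -
      fix e assume e: "e \<in> F'" "b e = b e1"
      then have ex: "\<exists>f\<in>F'. b f = b e1" by blast
      have "(SOME f. f \<in> F' \<and> b f = b e1) = e"
        using someI_ex[of "\<lambda>f. f \<in> F' \<and> b f = b e1"] ex uniq1 e by blast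
      then show "col e \<noteq> col e1" using e ex ne unfolding col_def c1_def F'_def by auto
    qed
    have h2: "\<And>e. e \<in> F' \<Longrightarrow> b e = b e2 \<Longrightarrow> col e \<noteq> col e2"
    proof -
      fix e assume e: "e \<in> F'" "b e = b e2"
      then have ex: "\<exists>g\<in>F'. b g = b e2" by blast
      have sg: "(SOME g. g \<in> F' \<and> b g = b e2) = e"
        using someI_ex[of "\<lambda>f. f \<in> F' \<and> b f = b e2"] ex uniq2 e by blast
      show "col e \<noteq> col e2"
      proof (cases "\<exists>f\<in>F'. b f = b e1")
        case True
        define f where "f = (SOME f. f \<in> F' \<and> b f = b e1)"
        have f: "f \<in> F'" "b f = b e1" using someI_ex[of "\<lambda>f. f \<in> F' \<and> b f = b e1"] True
          unfolding f_def by blast+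
        have "f \<noteq> e" using f e False by auto
        moreover have "b' f = b' e" using f e unfolding b'_def by auto
        ultimately have "col' f \<noteq> col' e" using c' f e unfolding PC_def by blast
        then show ?thesis using True e ne unfolding col_def c1_def f_def F'_def by auto
      next
        case nf: False
        then show ?thesis using ex sg e ne unfolding col_def c1_def F'_def by auto
      qed
    qed
    have h4: "\<And>e e'. e \<in> F' \<Longrightarrow> e' \<in> F' \<Longrightarrow> e \<noteq> e' \<Longrightarrow> a e = a e' \<or> b e = b e' \<Longrightarrow> col e \<noteq> col e'"
    proof -
      fix e e' assume "e \<in> F'" "e' \<in> F'" "e \<noteq> e'" "a e = a e' \<or> b e = b e'"
      moreover have "b e = b e' \<Longrightarrow> b' e = b' e'" unfolding b'_def by auto
      ultimately have "col' e \<noteq> col' e'" using c' unfolding PC_def by blast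
      then show "col e \<noteq> col e'" using \<open>e \<in> F'\<close> \<open>e' \<in> F'\<close> unfolding col_def F'_def by auto
    qed
    have h3: "col e1 \<noteq> col e2" using ne unfolding col_def by auto
    have nob1: "\<And>e. e \<in> F' \<Longrightarrow> a e \<noteq> a e2" using noa aeq by auto
    have "PC F a b col"
      unfolding PC_def
    proof (intro ballI impI)
      fix e e' assume ee: "e \<in> F" "e' \<in> F" "e \<noteq> e'" "a e = a e' \<or> b e = b e'"
      have FF: "F = F' \<union> {e1, e2}" using e1 e2 unfolding F'_def by blast
      consider "e \<in> F'" "e' \<in> F'" | "e \<in> F'" "e' = e1" | "e \<in> F'" "e' = e2" | "e' \<in> F'" "e = e1"
        | "e' \<in> F'" "e = e2" | "e = e1" "e' = e2" | "e = e2" "e' = e1" using ee FF by blast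
      then show "col e \<noteq> col e'"
      proof cases
        case 1 then show ?thesis using h4 ee by blast
      next
        case 2 then show ?thesis using ee noa h1 by blast
      next
        case 3 then show ?thesis using ee nob1 h2 by blast
      next
        case 4
        then have "a e' \<noteq> a e" using noa by auto
        then have "b e' = b e" using ee(4) by auto
        then have "col e' \<noteq> col e" using h1 4 by auto
        then show ?thesis by auto
      next
        case 5
        then have "a e' \<noteq> a e" using nob1 by auto
        then have "b e' = b e" using ee(4) by auto
        then have "col e' \<noteq> col e" using h2 5 by auto
        then show ?thesis by auto
      next
        case 6 then show ?thesis using h3 by simp
      next
        case 7 then show ?thesis using h3 by simp
      qed
    qed
    then show ?thesis by blast
  qed
qed

lemma colour_exists:
  fixes F :: "'e set" and a b :: "'e \<Rightarrow> 'v"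
  assumes "finite F" "D3 F a" "D3 F b"
  shows "\<exists>col. PC F a b col"
  using assms
proof (induction F arbitrary: a b rule: finite_psubset_induct)
  case (psubset F)
  note IH = psubset.IH
  show ?case
  proof (cases "\<exists>e1\<in>F. \<exists>e2\<in>F. e1 \<noteq> e2 \<and> a e1 = a e2")
    case True
    then obtain e1 e2 where "e1 \<in> F" "e2 \<in> F" "e1 \<noteq> e2" "a e1 = a e2" by blast
    from colour_step[OF IH psubset.prems(1) psubset.prems(2) this]
    show ?thesis .
  next
    case na: False
    show ?thesis
    proof (cases "\<exists>e1\<in>F. \<exists>e2\<in>F. e1 \<noteq> e2 \<and> b e1 = b e2")
      case True
      then obtain e1 e2 where "e1 \<in> F" "e2 \<in> F" "e1 \<noteq> e2" "b e1 = b e2" by blast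
      from colour_step[OF IH psubset.prems(2) psubset.prems(1) this]
      show ?thesis unfolding PC_swap[of F a b] .
    next
      case False
      then have "PC F a b (\<lambda>_. True)" using na unfolding PC_def by blast
      then show ?thesis by blast
    qed
  qed
qed



definition okp :: "('e \<Rightarrow> 'v) \<Rightarrow> ('e \<Rightarrow> 'v) \<Rightarrow> ('e \<Rightarrow> bool) \<Rightarrow> 'e \<times> bool \<Rightarrow> 'e \<times> bool \<Rightarrow> bool" where
  "okp pa pb s p q \<longleftrightarrow> \<not> (pa (fst p) = pa (fst q) \<and> snd p = snd q) \<and>
      \<not> (pb (fst p) = pb (fst q) \<and> (snd p \<noteq> s (fst p)) = (snd q \<noteq> s (fst q)))"

definition mt :: "('e \<Rightarrow> 'v) \<Rightarrow> ('e \<Rightarrow> 'v) \<Rightarrow> ('e \<Rightarrow> bool) \<Rightarrow> ('e \<times> bool) set \<Rightarrow> bool" where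
  "mt pa pb s P \<longleftrightarrow> (\<forall>p\<in>P. \<forall>q\<in>P. p \<noteq> q \<longrightarrow> okp pa pb s p q)"

definition proj :: "('e \<times> bool) set \<Rightarrow> 'e \<Rightarrow> bool \<times> bool" where
  "proj P = (\<lambda>e. ((e,True) \<in> P \<or> (e,False) \<in> P, (e,True) \<in> P \<and> (e,False) \<in> P))"

definition Tr :: "('e \<Rightarrow> bool) \<Rightarrow> ('e \<times> bool) set \<Rightarrow> ('e \<times> bool) set" where
  "Tr d P = (\<lambda>(e,i). (e, i \<noteq> d e)) ` P"

lemma mem_Tr: "(e,j) \<in> Tr d P \<longleftrightarrow> (e, j \<noteq> d e) \<in> P"
proof
  assume "(e,j) \<in> Tr d P"
  then obtain e' i where "(e',i) \<in> P" "(e,j) = (e', i \<noteq> d e')" unfolding Tr_def by auto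
  then show "(e, j \<noteq> d e) \<in> P" by auto
next
  assume "(e, j \<noteq> d e) \<in> P"
  then have "(\<lambda>(e,i). (e, i \<noteq> d e)) (e, j \<noteq> d e) \<in> Tr d P" unfolding Tr_def by blast
  then show "(e,j) \<in> Tr d P" by (cases j; cases "d e"; simp)
qed

lemma inj_Tr: fixes d :: "'e \<Rightarrow> bool" assumes h: "Tr d P = Tr d Q" shows "P = Q"
proof (rule set_eqI)
  fix x :: "'e \<times> bool"
  obtain e i where x: "x = (e,i)" by (cases x)
  have "(e, i \<noteq> d e) \<in> Tr d P \<longleftrightarrow> (e, i \<noteq> d e) \<in> Tr d Q" using h by simp
  then show "x \<in> P \<longleftrightarrow> x \<in> Q" unfolding x mem_Tr by (cases i; cases "d e"; simp)
qed

lemma proj_Tr: "proj (Tr d P) = proj P"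
proof (rule ext)
  fix e show "proj (Tr d P) e = proj P e"
    by (cases "d e") (auto simp add: proj_def mem_Tr)
qed

lemma card_Tr: "card (Tr d P) = card P"
  unfolding Tr_def by (rule card_image) (auto simp: inj_on_def)

lemma Tr_sub: "P \<subseteq> X \<times> UNIV \<Longrightarrow> Tr d P \<subseteq> X \<times> UNIV"
  unfolding Tr_def by auto

lemma mtD: "mt pa pb s P \<Longrightarrow> p \<in> P \<Longrightarrow> q \<in> P \<Longrightarrow> p \<noteq> q \<Longrightarrow> okp pa pb s p q"
  unfolding mt_def by blast

lemma single_lem:
  assumes "mt pa pb s P" "(e,i) \<in> P" "(e',j) \<in> P" "e \<noteq> e'" "pa e = pa e' \<or> pb e = pb e'"
  shows "(e, \<not> i) \<notin> P"
proof
  assume h: "(e, \<not> i) \<in> P"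
  have "okp pa pb s (e,i) (e',j)" using mtD[OF assms(1,2,3)] assms(4) by simp
  moreover have "okp pa pb s (e,\<not>i) (e',j)" using mtD[OF assms(1) h assms(3)] assms(4) by simp
  ultimately have "okp pa pb s (e,i) (e',j)" "okp pa pb s (e,\<not>i) (e',j)" by auto
  then show False using assms(5) unfolding okp_def by auto
qed

lemma lv_single: "(e,i) \<in> P \<Longrightarrow> (e, \<not> i) \<notin> P \<Longrightarrow> ((e,True) \<in> P) = i"
  by (cases i) auto

lemma proj_single:
  assumes "proj P0 = proj P" "(e,i) \<in> P" "(e, \<not> i) \<notin> P"
  shows "(e, (e,True) \<in> P0) \<in> P0 \<and> (e, \<not> ((e,True) \<in> P0)) \<notin> P0"
proof -
  have "proj P0 e = proj P e" using assms(1) by simp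
  then have "((e,True) \<in> P0 \<or> (e,False) \<in> P0) \<and> \<not> ((e,True) \<in> P0 \<and> (e,False) \<in> P0)"
    using assms(2,3) unfolding proj_def by (cases i) auto
  then show ?thesis by (cases "(e,True) \<in> P0") auto
qed

lemma transfer:
  assumes mP: "mt pa pb s P" and mP0: "mt pa pb s P0" and mQ0: "mt pa pb (\<lambda>_. False) Q0"
    and pP0: "proj P0 = proj P" and pQ0: "proj Q0 = proj P"
  shows "mt pa pb (\<lambda>_. False) (Tr (\<lambda>e. ((e,True) \<in> P0) \<noteq> ((e,True) \<in> Q0)) P)"
proof -
  define d where "d = (\<lambda>e. ((e,True) \<in> P0) \<noteq> ((e,True) \<in> Q0))"
  have "\<forall>p\<in>Tr d P. \<forall>q\<in>Tr d P. p \<noteq> q \<longrightarrow> okp pa pb (\<lambda>_. False) p q"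
  proof (intro ballI impI)
  fix p q assume p: "p \<in> Tr d P" and q: "q \<in> Tr d P" and pq: "p \<noteq> q"
  obtain e i' where pe: "p = (e,i')" by (cases p)
  obtain e' j' where qe: "q = (e',j')" by (cases q)
  define i where "i = (i' \<noteq> d e)"
  define j where "j = (j' \<noteq> d e')"
  have iP: "(e,i) \<in> P" using p unfolding pe mem_Tr i_def .
  have jP: "(e',j) \<in> P" using q unfolding qe mem_Tr j_def .
  have i'i: "i' = (i \<noteq> d e)" "j' = (j \<noteq> d e')" unfolding i_def j_def by auto
  show "okp pa pb (\<lambda>_. False) p q"
  proof (cases "e = e'")
    case True
    then have "i' \<noteq> j'" using pq pe qe by auto
    then show ?thesis unfolding pe qe okp_def using True by auto
  next
    case ne: False
    have ok: "okp pa pb s (e,i) (e',j)" using mtD[OF mP iP jP] ne by auto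
    have main: "i' \<noteq> j'" if sh: "pa e = pa e' \<or> pb e = pb e'"
    proof -
      have s1: "(e, \<not> i) \<notin> P" using single_lem[OF mP iP jP ne sh] .
      have s2: "(e', \<not> j) \<notin> P" using single_lem[OF mP jP iP] ne sh by auto
      have P0e: "(e, (e,True) \<in> P0) \<in> P0" using proj_single[OF pP0 iP s1] by blast
      have P0e': "(e', (e',True) \<in> P0) \<in> P0" using proj_single[OF pP0 jP s2] by blast
      have Q0e: "(e, (e,True) \<in> Q0) \<in> Q0" using proj_single[OF pQ0 iP s1] by blast
      have Q0e': "(e', (e',True) \<in> Q0) \<in> Q0" using proj_single[OF pQ0 jP s2] by blast
      have ok0: "okp pa pb s (e, (e,True) \<in> P0) (e', (e',True) \<in> P0)"
        using mtD[OF mP0 P0e P0e'] ne by auto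
      have okq: "okp pa pb (\<lambda>_. False) (e, (e,True) \<in> Q0) (e', (e',True) \<in> Q0)"
        using mtD[OF mQ0 Q0e Q0e'] ne by auto
      have li: "((e,True) \<in> P) = i" using lv_single[OF iP s1] .
      have lj: "((e',True) \<in> P) = j" using lv_single[OF jP s2] .
      show ?thesis
      proof (cases "pa e = pa e'")
        case True
        then show ?thesis using ok ok0 okq unfolding okp_def i'i d_def by auto
      next
        case False
        then have "pb e = pb e'" using sh by auto
        then show ?thesis using ok ok0 okq unfolding okp_def i'i d_def by auto
      qed
    qed
    show ?thesis unfolding pe qe okp_def using main by auto
  qed
  qed
  then show ?thesis unfolding mt_def d_def .
qed

lemma double_lem:
  assumes "mt pa pb s P" "(e,True) \<in> P" "(e,False) \<in> P" "(e',j0) \<in> P" "e \<noteq> e'"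
  shows "pa e \<noteq> pa e' \<and> pb e \<noteq> pb e'"
proof -
  have m1: "(e, j0) \<in> P" by (cases j0) (use assms(2,3) in auto)
  have m2: "(e, (j0 \<noteq> s e') \<noteq> s e) \<in> P" by (cases "(j0 \<noteq> s e') \<noteq> s e") (use assms(2,3) in auto)
  have "okp pa pb s (e,j0) (e',j0)" by (rule mtD[OF assms(1) m1 assms(4)]) (use assms(5) in simp)
  moreover have "okp pa pb s (e, (j0 \<noteq> s e') \<noteq> s e) (e',j0)"
    by (rule mtD[OF assms(1) m2 assms(4)]) (use assms(5) in simp)
  ultimately have "okp pa pb s (e,j0) (e',j0)" "okp pa pb s (e, (j0 \<noteq> s e') \<noteq> s e) (e',j0)" by auto
  then show ?thesis unfolding okp_def by auto
qed

lemma exists_G: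
  assumes fin: "finite E'" and sub: "P \<subseteq> E' \<times> UNIV" and mP: "mt pa pb s P"
  shows "\<exists>Q. Q \<subseteq> E' \<times> UNIV \<and> mt pa pb (\<lambda>_. False) Q \<and> proj Q = proj P"
proof -
  define F where "F = {e\<in>E'. ((e,True) \<in> P) \<noteq> ((e,False) \<in> P)}"
  define lv where "lv = (\<lambda>e. (e,True) \<in> P)"
  have lvF: "\<And>e. e \<in> F \<Longrightarrow> (e, lv e) \<in> P" by (cases "(e,True) \<in> P") (auto simp: F_def lv_def)
  have DA: "D3 F pa" unfolding D3_def
  proof (intro ballI impI)
    fix e1 e2 e3 assume h: "e1 \<in> F" "e2 \<in> F" "e3 \<in> F" "e1 \<noteq> e2" "e1 \<noteq> e3" "e2 \<noteq> e3" "pa e1 = pa e2"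
    show "pa e1 \<noteq> pa e3"
    proof
      assume h3: "pa e1 = pa e3"
      have "okp pa pb s (e1, lv e1) (e2, lv e2)" using mtD[OF mP lvF lvF] h by simp
      moreover have "okp pa pb s (e1, lv e1) (e3, lv e3)" using mtD[OF mP lvF lvF] h by simp
      moreover have "okp pa pb s (e2, lv e2) (e3, lv e3)" using mtD[OF mP lvF lvF] h by simp
      ultimately have "okp pa pb s (e1, lv e1) (e2, lv e2)" "okp pa pb s (e1, lv e1) (e3, lv e3)"
        "okp pa pb s (e2, lv e2) (e3, lv e3)" by auto
      then show False using h h3 unfolding okp_def by auto
    qed
  qed
  have DB: "D3 F pb" unfolding D3_def
  proof (intro ballI impI)
    fix e1 e2 e3 assume h: "e1 \<in> F" "e2 \<in> F" "e3 \<in> F" "e1 \<noteq> e2" "e1 \<noteq> e3" "e2 \<noteq> e3" "pb e1 = pb e2"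
    show "pb e1 \<noteq> pb e3"
    proof
      assume h3: "pb e1 = pb e3"
      have "okp pa pb s (e1, lv e1) (e2, lv e2)" using mtD[OF mP lvF lvF] h by simp
      moreover have "okp pa pb s (e1, lv e1) (e3, lv e3)" using mtD[OF mP lvF lvF] h by simp
      moreover have "okp pa pb s (e2, lv e2) (e3, lv e3)" using mtD[OF mP lvF lvF] h by simp
      ultimately have "okp pa pb s (e1, lv e1) (e2, lv e2)" "okp pa pb s (e1, lv e1) (e3, lv e3)"
        "okp pa pb s (e2, lv e2) (e3, lv e3)" by auto
      then show False using h h3 unfolding okp_def by auto
    qed
  qed
  have finF: "finite F" using fin unfolding F_def by auto
  obtain col where col: "PC F pa pb col" using colour_exists[OF finF DA DB] by blast
  define Q where "Q = {(e,i). e \<in> E' \<and> (((e,True) \<in> P \<and> (e,False) \<in> P) \<or> (e \<in> F \<and> i = col e))}"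
  have "Q \<subseteq> E' \<times> UNIV" unfolding Q_def by auto
  moreover have "mt pa pb (\<lambda>_. False) Q" unfolding mt_def
  proof (intro ballI impI)
    fix p q assume p: "p \<in> Q" and q: "q \<in> Q" and pq: "p \<noteq> q"
    obtain e i where pe: "p = (e,i)" by (cases p)
    obtain e' j where qe: "q = (e',j)" by (cases q)
    have exP: "\<And>x y. (x,y) \<in> Q \<Longrightarrow> \<exists>y0. (x,y0) \<in> P"
      unfolding Q_def F_def by auto
    show "okp pa pb (\<lambda>_. False) p q"
    proof (cases "e = e'")
      case True
      then show ?thesis using pq unfolding pe qe okp_def by auto
    next
      case ne: False
      show ?thesis
      proof (cases "(e,True) \<in> P \<and> (e,False) \<in> P")
        case True
        obtain j0 where "(e',j0) \<in> P" using exP q qe by blast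
        then have "pa e \<noteq> pa e' \<and> pb e \<noteq> pb e'"
          using double_lem[OF mP conjunct1[OF True] conjunct2[OF True] _ ne] by blast
        then show ?thesis unfolding pe qe okp_def by auto
      next
        case nd: False
        show ?thesis
        proof (cases "(e',True) \<in> P \<and> (e',False) \<in> P")
          case True
          obtain j0 where "(e,j0) \<in> P" using exP p pe by blast
          moreover have "e' \<noteq> e" using ne by auto
          ultimately have "pa e' \<noteq> pa e \<and> pb e' \<noteq> pb e"
            using double_lem[OF mP conjunct1[OF True] conjunct2[OF True]] by blast
          then show ?thesis unfolding pe qe okp_def by auto
        next
          case False
          then have "e \<in> F" "e' \<in> F" "i = col e" "j = col e'" using p q nd unfolding pe qe Q_def by auto
          note ff = this
          have "pa e = pa e' \<or> pb e = pb e' \<Longrightarrow> col e \<noteq> col e'"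
            using col ff(1,2) ne unfolding PC_def by blast
          then show ?thesis using ff(3,4) unfolding pe qe okp_def by auto
        qed
      qed
    qed
  qed
  moreover have "proj Q = proj P"
  proof
    fix e
    show "proj Q e = proj P e"
    proof (cases "e \<in> E'")
      case True
      then show ?thesis unfolding proj_def Q_def F_def by (cases "col e") auto
    next
      case False
      then show ?thesis using sub unfolding proj_def Q_def by auto
    qed
  qed
  ultimately show ?thesis by blast
qed

lemma inj_exists:
  assumes fin: "finite E'"
  shows "\<exists>f. inj_on f {P. P \<subseteq> E' \<times> UNIV \<and> mt pa pb s P} \<and>
      f ` {P. P \<subseteq> E' \<times> UNIV \<and> mt pa pb s P} \<subseteq> {P. P \<subseteq> E' \<times> UNIV \<and> mt pa pb (\<lambda>_. False) P} \<and>
      (\<forall>P \<in> {P. P \<subseteq> E' \<times> UNIV \<and> mt pa pb s P}. card (f P) = card P)"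
proof -
  define HS where "HS = {P. P \<subseteq> E' \<times> UNIV \<and> mt pa pb s P}"
  define GS where "GS = {P. P \<subseteq> E' \<times> UNIV \<and> mt pa pb (\<lambda>_. False) P}"
  define selH where "selH = (\<lambda>c. SOME P0. P0 \<in> HS \<and> proj P0 = c)"
  define selG where "selG = (\<lambda>c. SOME Q0. Q0 \<in> GS \<and> proj Q0 = c)"
  define f where "f = (\<lambda>P. Tr (\<lambda>e. ((e,True) \<in> selH (proj P)) \<noteq> ((e,True) \<in> selG (proj P))) P)"
  have sH: "selH (proj P) \<in> HS \<and> proj (selH (proj P)) = proj P" if "P \<in> HS" for P
    unfolding selH_def by (rule someI[of "\<lambda>P0. P0 \<in> HS \<and> proj P0 = proj P" P]) (simp add: that)
  have sG: "selG (proj P) \<in> GS \<and> proj (selG (proj P)) = proj P" if "P \<in> HS" for P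
  proof -
    have hp: "P \<subseteq> E' \<times> UNIV" "mt pa pb s P" using that unfolding HS_def by auto
    obtain Q where Q: "Q \<subseteq> E' \<times> UNIV \<and> mt pa pb (\<lambda>_. False) Q \<and> proj Q = proj P"
      using exists_G[OF fin hp] by blast
    have "Q \<in> GS \<and> proj Q = proj P" using Q unfolding GS_def by simp
    then show ?thesis unfolding selG_def by (rule someI)
  qed
  have img: "f P \<in> GS" if "P \<in> HS" for P
  proof -
    have a1: "mt pa pb s P" "P \<subseteq> E' \<times> UNIV" using that unfolding HS_def by auto
    have a2: "mt pa pb s (selH (proj P))" "proj (selH (proj P)) = proj P"
      using sH[OF that] unfolding HS_def by auto
    have a3: "mt pa pb (\<lambda>_. False) (selG (proj P))" "proj (selG (proj P)) = proj P"
      using sG[OF that] unfolding GS_def by auto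
    have "mt pa pb (\<lambda>_. False) (f P)" unfolding f_def
      by (rule transfer[OF a1(1) a2(1) a3(1) a2(2) a3(2)])
    moreover have "f P \<subseteq> E' \<times> UNIV" unfolding f_def by (rule Tr_sub[OF a1(2)])
    ultimately show ?thesis unfolding GS_def by auto
  qed
  have pf: "proj (f P) = proj P" for P unfolding f_def by (rule proj_Tr)
  have "inj_on f HS"
  proof
    fix P P' assume "P \<in> HS" "P' \<in> HS" and eq: "f P = f P'"
    have "proj P = proj (f P)" using pf[of P] by simp
    also have "\<dots> = proj (f P')" using eq by simp
    also have "\<dots> = proj P'" using pf[of P'] by simp
    finally have pp: "proj P = proj P'" .
    define D where "D = (\<lambda>e. ((e,True) \<in> selH (proj P)) \<noteq> ((e,True) \<in> selG (proj P)))"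
    have "f P' = Tr D P'" unfolding f_def D_def pp ..
    moreover have "f P = Tr D P" unfolding f_def D_def ..
    ultimately have "Tr D P = Tr D P'" using eq by simp
    then show "P = P'" by (rule inj_Tr)
  qed
  moreover have "\<forall>P\<in>HS. card (f P) = card P" unfolding f_def by (simp add: card_Tr)
  moreover have "f ` HS \<subseteq> GS" using img by auto
  ultimately have "inj_on f HS \<and> f ` HS \<subseteq> GS \<and> (\<forall>P\<in>HS. card (f P) = card P)" by blast
  then show ?thesis unfolding HS_def GS_def by blast
qed

lemma count_le:
  assumes fin: "finite E'"
  shows "card {P. P \<subseteq> E' \<times> UNIV \<and> mt pa pb s P \<and> card P = k}
       \<le> card {P. P \<subseteq> E' \<times> UNIV \<and> mt pa pb (\<lambda>_. False) P \<and> card P = k}"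
proof -
  define HS where "HS = {P. P \<subseteq> E' \<times> UNIV \<and> mt pa pb s P}"
  define GS where "GS = {P. P \<subseteq> E' \<times> UNIV \<and> mt pa pb (\<lambda>_. False) P}"
  obtain f where f: "inj_on f HS" "f ` HS \<subseteq> GS" "\<forall>P \<in> HS. card (f P) = card P"
    using inj_exists[OF fin, of pa pb s] unfolding HS_def GS_def by blast
  have finT: "finite {P. P \<subseteq> E' \<times> UNIV \<and> mt pa pb (\<lambda>_. False) P \<and> card P = k}"
    by (rule finite_subset[of _ "Pow (E' \<times> UNIV)"]) (use fin in auto)
  have A: "{P. P \<subseteq> E' \<times> UNIV \<and> mt pa pb s P \<and> card P = k} = {P\<in>HS. card P = k}"
    unfolding HS_def by auto
  have B: "{P. P \<subseteq> E' \<times> UNIV \<and> mt pa pb (\<lambda>_. False) P \<and> card P = k} = {P\<in>GS. card P = k}"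
    unfolding GS_def by auto
  have i: "inj_on f {P\<in>HS. card P = k}" using f(1) by (rule inj_on_subset) auto
  have sb: "f ` {P\<in>HS. card P = k} \<subseteq> {P\<in>GS. card P = k}" using f(2,3) by auto
  show ?thesis unfolding A B
    using card_inj_on_le[OF i sb] finT unfolding B by blast
qed

lemma sum_le:
  assumes fin: "finite E'" and t: "(t::real) \<ge> 0"
  shows "(\<Sum>P\<in>{P. P \<subseteq> E' \<times> UNIV \<and> mt pa pb s P}. t ^ card P)
       \<le> (\<Sum>P\<in>{P. P \<subseteq> E' \<times> UNIV \<and> mt pa pb (\<lambda>_. False) P}. t ^ card P)"
proof -
  define HS where "HS = {P. P \<subseteq> E' \<times> UNIV \<and> mt pa pb s P}"
  define GS where "GS = {P. P \<subseteq> E' \<times> UNIV \<and> mt pa pb (\<lambda>_. False) P}"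
  obtain f where f: "inj_on f HS" "f ` HS \<subseteq> GS" "\<forall>P \<in> HS. card (f P) = card P"
    using inj_exists[OF fin, of pa pb s] unfolding HS_def GS_def by blast
  have finG: "finite GS" unfolding GS_def
    by (rule finite_subset[of _ "Pow (E' \<times> UNIV)"]) (use fin in auto)
  have "(\<Sum>P\<in>HS. t ^ card P) = (\<Sum>P\<in>HS. t ^ card (f P))" using f(3) by simp
  also have "\<dots> = (\<Sum>Q\<in>f ` HS. t ^ card Q)" using sum.reindex[OF f(1), of "\<lambda>Q. t ^ card Q"] by simp
  also have "\<dots> \<le> (\<Sum>Q\<in>GS. t ^ card Q)"
    by (rule sum_mono2[OF finG f(2)]) (use t in simp)
  finally show ?thesis unfolding HS_def GS_def .
qed



definition hed :: "('a set \<Rightarrow> 'a) \<Rightarrow> ('a set \<Rightarrow> 'a) \<Rightarrow> ('a set \<Rightarrow> bool) \<Rightarrow> 'a set \<times> bool \<Rightarrow> ('a \<times> bool) set" where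
  "hed pa pb s p = {(pa (fst p), snd p), (pb (fst p), snd p \<noteq> s (fst p))}"

lemma match_image:
  assumes inj: "inj_on h X"
  shows "{M. matching (h ` X) M} = (\<lambda>P. h ` P) ` {P. P \<subseteq> X \<and> (\<forall>p\<in>P. \<forall>q\<in>P. p \<noteq> q \<longrightarrow> h p \<inter> h q = {})}"
proof
  show "{M. matching (h ` X) M} \<subseteq> (\<lambda>P. h ` P) ` {P. P \<subseteq> X \<and> (\<forall>p\<in>P. \<forall>q\<in>P. p \<noteq> q \<longrightarrow> h p \<inter> h q = {})}"
  proof
    fix M assume "M \<in> {M. matching (h ` X) M}"
    then have M: "M \<subseteq> h ` X" "\<forall>e\<in>M. \<forall>f\<in>M. e \<noteq> f \<longrightarrow> e \<inter> f = {}" unfolding matching_def by auto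
    define P where "P = {x\<in>X. h x \<in> M}"
    have "h ` P = M" using M(1) unfolding P_def by auto
    moreover have "P \<subseteq> X \<and> (\<forall>p\<in>P. \<forall>q\<in>P. p \<noteq> q \<longrightarrow> h p \<inter> h q = {})"
    proof -
      have "\<forall>p\<in>P. \<forall>q\<in>P. p \<noteq> q \<longrightarrow> h p \<inter> h q = {}"
      proof (intro ballI impI)
        fix p q assume "p \<in> P" "q \<in> P" "p \<noteq> q"
        then have "h p \<noteq> h q" "h p \<in> M" "h q \<in> M" using inj unfolding P_def inj_on_def by auto
        then show "h p \<inter> h q = {}" using M(2) by blast
      qed
      then show ?thesis unfolding P_def by auto
    qed
    ultimately show "M \<in> (\<lambda>P. h ` P) ` {P. P \<subseteq> X \<and> (\<forall>p\<in>P. \<forall>q\<in>P. p \<noteq> q \<longrightarrow> h p \<inter> h q = {})}"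
      by blast
  qed
next
  show "(\<lambda>P. h ` P) ` {P. P \<subseteq> X \<and> (\<forall>p\<in>P. \<forall>q\<in>P. p \<noteq> q \<longrightarrow> h p \<inter> h q = {})} \<subseteq> {M. matching (h ` X) M}"
  proof
    fix M assume "M \<in> (\<lambda>P. h ` P) ` {P. P \<subseteq> X \<and> (\<forall>p\<in>P. \<forall>q\<in>P. p \<noteq> q \<longrightarrow> h p \<inter> h q = {})}"
    then obtain P where P: "M = h ` P" "P \<subseteq> X" "\<forall>p\<in>P. \<forall>q\<in>P. p \<noteq> q \<longrightarrow> h p \<inter> h q = {}" by blast
    have "\<forall>e\<in>M. \<forall>f\<in>M. e \<noteq> f \<longrightarrow> e \<inter> f = {}"
    proof (intro ballI impI)
      fix e f assume "e \<in> M" "f \<in> M" "e \<noteq> f"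
      then obtain p q where "p \<in> P" "q \<in> P" "e = h p" "f = h q" using P(1) by blast
      moreover then have "p \<noteq> q" using \<open>e \<noteq> f\<close> by auto
      ultimately show "e \<inter> f = {}" using P(3) by blast
    qed
    then show "M \<in> {M. matching (h ` X) M}" unfolding matching_def using P by auto
  qed
qed

lemma match_count:
  assumes inj: "inj_on h X"
  shows "num_matchings (h ` X) k = card {P. P \<subseteq> X \<and> (\<forall>p\<in>P. \<forall>q\<in>P. p \<noteq> q \<longrightarrow> h p \<inter> h q = {}) \<and> card P = k}"
proof -
  define S where "S = {P. P \<subseteq> X \<and> (\<forall>p\<in>P. \<forall>q\<in>P. p \<noteq> q \<longrightarrow> h p \<inter> h q = {})}"
  have cd: "card (h ` P) = card P" if "P \<in> S" for P
    using that inj unfolding S_def by (metis (mono_tags, lifting) card_image inj_on_subset mem_Collect_eq)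
  have "{M. matching (h ` X) M \<and> card M = k} = {M \<in> {M. matching (h ` X) M}. card M = k}" by simp
  also have "\<dots> = (\<lambda>P. h ` P) ` {P\<in>S. card P = k}"
    unfolding match_image[OF inj] S_def[symmetric] using cd by auto
  finally have eq: "{M. matching (h ` X) M \<and> card M = k} = (\<lambda>P. h ` P) ` {P\<in>S. card P = k}" .
  have ij: "inj_on (\<lambda>P. h ` P) {P\<in>S. card P = k}"
    unfolding inj_on_def using inj_on_image_eq_iff[OF inj] unfolding S_def by auto
  have "num_matchings (h ` X) k = card ((\<lambda>P. h ` P) ` {P\<in>S. card P = k})"
    unfolding num_matchings_def eq ..
  also have "\<dots> = card {P\<in>S. card P = k}" by (rule card_image[OF ij])
  finally show ?thesis unfolding S_def by simp
qed

lemma match_sum: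
  assumes inj: "inj_on h X"
  shows "(\<Sum>M\<in>{M. matching (h ` X) M}. (t::real) ^ card M)
     = (\<Sum>P\<in>{P. P \<subseteq> X \<and> (\<forall>p\<in>P. \<forall>q\<in>P. p \<noteq> q \<longrightarrow> h p \<inter> h q = {})}. t ^ card P)"
proof -
  define S where "S = {P. P \<subseteq> X \<and> (\<forall>p\<in>P. \<forall>q\<in>P. p \<noteq> q \<longrightarrow> h p \<inter> h q = {})}"
  have cd: "card (h ` P) = card P" if "P \<in> S" for P
    using that inj unfolding S_def by (metis (mono_tags, lifting) card_image inj_on_subset mem_Collect_eq)
  have ij: "inj_on (\<lambda>P. h ` P) S"
    unfolding inj_on_def using inj_on_image_eq_iff[OF inj] unfolding S_def by auto
  have "(\<Sum>M\<in>{M. matching (h ` X) M}. t ^ card M) = (\<Sum>M\<in>(\<lambda>P. h ` P) ` S. t ^ card M)"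
    unfolding match_image[OF inj] S_def ..
  also have "\<dots> = (\<Sum>P\<in>S. t ^ card (h ` P))" by (rule sum.reindex[OF ij, unfolded comp_def])
  also have "\<dots> = (\<Sum>P\<in>S. t ^ card P)" using cd by simp
  finally show ?thesis unfolding S_def .
qed

lemma poly_as_sum:
  assumes "finite E"
  shows "matching_poly E t = (\<Sum>M\<in>{M. matching E M}. t ^ card M)"
proof -
  define S where "S = {M. matching E M}"
  have finS: "finite S" unfolding S_def matching_def using assms
    by (metis (no_types, lifting) Collect_mono Pow_def finite_Pow_iff rev_finite_subset)
  have sub: "card ` S \<subseteq> {..card E}" unfolding S_def matching_def using assms card_mono by fastforce
  have "matching_poly E t = (\<Sum>k\<le>card E. (\<Sum>M\<in>{M\<in>S. card M = k}. t ^ card M))"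
    unfolding matching_poly_def num_matchings_def S_def by simp
  also have "\<dots> = (\<Sum>M\<in>S. t ^ card M)"
    using sum.group[OF finS _ sub, of "\<lambda>M. t ^ card M"] by simp
  finally show ?thesis unfolding S_def .
qed



theorem lemma4p2:
  fixes V :: "'a set" and E :: "'a set set" and EH :: "('a \<times> bool) set set"
  assumes "simple_graph V E" and "bipartite V E" and "two_lift V E EH"
  shows "(\<forall>k. num_matchings (double_graph E) k \<ge> num_matchings EH k) \<and>
         (\<forall>t::real. t \<ge> 0 \<longrightarrow> (matching_poly E t)\<^sup>2 \<ge> matching_poly EH t)"
proof -
  have finV: "finite V" and Eedge: "\<forall>e\<in>E. \<exists>u v. u \<in> V \<and> v \<in> V \<and> u \<noteq> v \<and> e = {u, v}"
    using assms(1) unfolding simple_graph_def by auto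
  have finE: "finite E"
  proof (rule finite_subset[of _ "Pow V"])
    show "E \<subseteq> Pow V" using Eedge by auto
  qed (use finV in auto)
  obtain A where A: "A \<subseteq> V" and bip: "\<forall>u v. {u, v} \<in> E \<longrightarrow> (u \<in> A \<longleftrightarrow> v \<notin> A)"
    using assms(2) unfolding bipartite_def by blast
  have tl1: "\<forall>e\<in>EH. \<exists>u v i j. u \<in> V \<and> v \<in> V \<and> e = {(u, i), (v, j)}"
    using assms(3) unfolding two_lift_def by blast
  have tl2: "\<And>u v. u \<in> V \<Longrightarrow> v \<in> V \<Longrightarrow> {u, v} \<in> E \<Longrightarrow>
           (({(u,False),(v,False)} \<in> EH \<and> {(u,True),(v,True)} \<in> EH \<and>
             {(u,False),(v,True)} \<notin> EH \<and> {(u,True),(v,False)} \<notin> EH) \<or>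
            ({(u,False),(v,True)} \<in> EH \<and> {(u,True),(v,False)} \<in> EH \<and>
             {(u,False),(v,False)} \<notin> EH \<and> {(u,True),(v,True)} \<notin> EH))"
    using assms(3) unfolding two_lift_def by blast
  have tl3: "\<And>u v. u \<in> V \<Longrightarrow> v \<in> V \<Longrightarrow> {u, v} \<notin> E \<Longrightarrow>
           {(u,False),(v,False)} \<notin> EH \<and> {(u,True),(v,True)} \<notin> EH \<and>
           {(u,False),(v,True)} \<notin> EH \<and> {(u,True),(v,False)} \<notin> EH"
    using assms(3) unfolding two_lift_def by blast
  define pa where "pa = (\<lambda>e::'a set. SOME x. x \<in> e \<and> x \<in> A)"
  define pb where "pb = (\<lambda>e::'a set. SOME x. x \<in> e \<and> x \<notin> A)"
  have pab: "pa e \<in> A \<and> pb e \<notin> A \<and> {pa e, pb e} = e \<and> pa e \<in> V \<and> pb e \<in> V" if he: "e \<in> E" for e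
  proof -
    obtain u v where uv: "u \<in> V" "v \<in> V" "u \<noteq> v" "e = {u, v}" using Eedge he by blast
    have b: "u \<in> A \<longleftrightarrow> v \<notin> A" using bip he uv(4) by blast
    have ex1: "\<exists>x. x \<in> e \<and> x \<in> A" using b uv(4) by blast
    have ex2: "\<exists>x. x \<in> e \<and> x \<notin> A" using b uv(4) by blast
    have a1: "pa e \<in> e \<and> pa e \<in> A" unfolding pa_def using someI_ex[OF ex1] .
    have a2: "pb e \<in> e \<and> pb e \<notin> A" unfolding pb_def using someI_ex[OF ex2] .
    have "{pa e, pb e} = e" using a1 a2 uv by auto
    then show ?thesis using a1 a2 uv by auto
  qed
  define sgn where "sgn = (\<lambda>e. {(pa e,False),(pb e,True)} \<in> EH)"
  have lift_char: "{(pa e,i),(pb e,j)} \<in> EH \<longleftrightarrow> j = (i \<noteq> sgn e)" if "e \<in> E" for e i j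
  proof -
    have "{pa e, pb e} \<in> E" using pab[OF that] that by auto
    then have c: "(({(pa e,False),(pb e,False)} \<in> EH \<and> {(pa e,True),(pb e,True)} \<in> EH \<and>
             {(pa e,False),(pb e,True)} \<notin> EH \<and> {(pa e,True),(pb e,False)} \<notin> EH) \<or>
            ({(pa e,False),(pb e,True)} \<in> EH \<and> {(pa e,True),(pb e,False)} \<in> EH \<and>
             {(pa e,False),(pb e,False)} \<notin> EH \<and> {(pa e,True),(pb e,True)} \<notin> EH))"
      using tl2 pab[OF that] by blast
    show ?thesis using c unfolding sgn_def by (cases i; cases j; auto)
  qed
  define X where "X = E \<times> (UNIV :: bool set)"
  have pab_ne: "pa e \<noteq> pb e'" if h1: "e \<in> E" and h2: "e' \<in> E" for e e'
    using pab[OF h1] pab[OF h2] by auto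
  have disj: "hed pa pb s p \<inter> hed pa pb s q = {} \<longleftrightarrow> okp pa pb s p q" if hp: "p \<in> X" and hq: "q \<in> X" for s p q
  proof -
    obtain e i where p: "p = (e,i)" "e \<in> E" using hp unfolding X_def by auto
    obtain e' j where q: "q = (e',j)" "e' \<in> E" using hq unfolding X_def by auto
    have "pa e \<noteq> pb e'" "pa e' \<noteq> pb e" using pab_ne p q by auto
    then show ?thesis unfolding hed_def okp_def p q by auto
  qed
  have injh: "inj_on (hed pa pb s) X" for s
  proof
    fix p q assume pq: "p \<in> X" "q \<in> X" "hed pa pb s p = hed pa pb s q"
    obtain e i where p: "p = (e,i)" "e \<in> E" using pq(1) unfolding X_def by auto
    obtain e' j where q: "q = (e',j)" "e' \<in> E" using pq(2) unfolding X_def by auto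
    have n: "pa e \<noteq> pb e'" "pa e' \<noteq> pb e" using pab_ne p q by auto
    have "(pa e, i) \<in> hed pa pb s p" unfolding p hed_def by simp
    then have "(pa e, i) \<in> hed pa pb s q" using pq(3) by simp
    then have 1: "pa e = pa e'" "i = j" using n unfolding q hed_def by auto
    have "(pb e, i \<noteq> s e) \<in> hed pa pb s p" unfolding p hed_def by simp
    then have "(pb e, i \<noteq> s e) \<in> hed pa pb s q" using pq(3) by simp
    then have 2: "pb e = pb e'" using n unfolding q hed_def by auto
    have "e = {pa e, pb e}" using pab[OF p(2)] by simp
    also have "\<dots> = {pa e', pb e'}" using 1 2 by simp
    also have "\<dots> = e'" using pab[OF q(2)] by simp
    finally have "e = e'" .
    then show "p = q" using p q 1 by auto
  qed
  have S_iff: "(\<forall>p\<in>P. \<forall>q\<in>P. p \<noteq> q \<longrightarrow> hed pa pb s p \<inter> hed pa pb s q = {}) \<longleftrightarrow> mt pa pb s P"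
      if hPX: "P \<subseteq> X" for P s
      using disj hPX unfolding mt_def by (meson subsetD)
  have S_eq: "{P. P \<subseteq> X \<and> (\<forall>p\<in>P. \<forall>q\<in>P. p \<noteq> q \<longrightarrow> hed pa pb s p \<inter> hed pa pb s q = {})}
      = {P. P \<subseteq> X \<and> mt pa pb s P}" for s
    by (rule Collect_cong) (use S_iff in blast)
  have S_eqk: "{P. P \<subseteq> X \<and> (\<forall>p\<in>P. \<forall>q\<in>P. p \<noteq> q \<longrightarrow> hed pa pb s p \<inter> hed pa pb s q = {}) \<and> card P = k}
      = {P. P \<subseteq> X \<and> mt pa pb s P \<and> card P = k}" for s k
    by (rule Collect_cong) (use S_iff in blast)
  have EH_eq: "EH = hed pa pb sgn ` X"
  proof
    show "EH \<subseteq> hed pa pb sgn ` X"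
    proof
      fix e assume eH: "e \<in> EH"
      have "\<exists>u v i j. u \<in> V \<and> v \<in> V \<and> e = {(u, i), (v, j)}" using bspec[OF tl1 eH] .
      then obtain u v i j where uv0: "u \<in> V \<and> v \<in> V \<and> e = {(u, i), (v, j)}" by (elim exE)
      have uv: "u \<in> V" "v \<in> V" "e = {(u,i),(v,j)}" using uv0 by simp_all
      have inE: "{u,v} \<in> E"
      proof (rule ccontr)
        assume "{u,v} \<notin> E"
        then have "{(u,False),(v,False)} \<notin> EH \<and> {(u,True),(v,True)} \<notin> EH \<and>
           {(u,False),(v,True)} \<notin> EH \<and> {(u,True),(v,False)} \<notin> EH" using tl3[OF uv(1,2)] by blast
        moreover have "{(u,i),(v,j)} \<in> EH" using eH uv(3) by simp
        ultimately show False by (cases i; cases j; simp)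
      qed
      define ed where "ed = {u,v}"
      have ed: "ed \<in> E" using inE unfolding ed_def .
      have pp: "{pa ed, pb ed} = {u, v}" "pa ed \<noteq> pb ed" using pab[OF ed] unfolding ed_def by auto
      then have "(u = pa ed \<and> v = pb ed) \<or> (u = pb ed \<and> v = pa ed)" by (metis doubleton_eq_iff)
      then show "e \<in> hed pa pb sgn ` X"
      proof
        assume h: "u = pa ed \<and> v = pb ed"
        then have "{(pa ed,i),(pb ed,j)} \<in> EH" using eH uv(3) by simp
        then have "j = (i \<noteq> sgn ed)" using lift_char[OF ed] by blast
        then have "e = hed pa pb sgn (ed, i)" unfolding hed_def using uv(3) h by simp
        then show ?thesis using ed unfolding X_def by auto
      next
        assume h: "u = pb ed \<and> v = pa ed"
        then have "{(pa ed,j),(pb ed,i)} \<in> EH" using eH uv(3) by (simp add: insert_commute)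
        then have "i = (j \<noteq> sgn ed)" using lift_char[OF ed] by blast
        then have "e = hed pa pb sgn (ed, j)" unfolding hed_def using uv(3) h by (auto simp: insert_commute)
        then show ?thesis using ed unfolding X_def by auto
      qed
    qed
  next
    show "hed pa pb sgn ` X \<subseteq> EH"
    proof
      fix e assume "e \<in> hed pa pb sgn ` X"
      then obtain p where p: "p \<in> X" "e = hed pa pb sgn p" by blast
      obtain ed i where edi: "p = (ed, i)" by (cases p)
      have ed: "ed \<in> E" using p(1) edi unfolding X_def by simp
      have "{(pa ed,i),(pb ed, i \<noteq> sgn ed)} \<in> EH" using lift_char[OF ed] by simp
      then show "e \<in> EH" using p(2) edi unfolding hed_def by simp
    qed
  qed
  have DG_eq: "double_graph E = hed pa pb (\<lambda>_. False) ` X"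
  proof -
    have "(\<lambda>x. (x, i)) ` ed = hed pa pb (\<lambda>_. False) (ed, i)" if "ed \<in> E" for ed i
    proof -
      have "(\<lambda>x. (x, i)) ` ed = (\<lambda>x. (x, i)) ` {pa ed, pb ed}" using pab[OF that] by simp
      then show ?thesis by (simp add: hed_def)
    qed
    note pw = this
    have "double_graph E = (\<lambda>(ed,i). (\<lambda>x. (x, i)) ` ed) ` X" unfolding double_graph_def X_def by auto
    also have "\<dots> = hed pa pb (\<lambda>_. False) ` X"
    proof (rule image_cong[OF refl])
      fix x assume "x \<in> X"
      then obtain ed i where x: "x = (ed,i)" "ed \<in> E" unfolding X_def by auto
      show "(\<lambda>(ed,i). (\<lambda>x. (x, i)) ` ed) x = hed pa pb (\<lambda>_. False) x" using pw[OF x(2)] x(1) by simp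
    qed
    finally show ?thesis .
  qed
  have finX: "finite X" unfolding X_def using finE by simp
  have part1: "num_matchings (double_graph E) k \<ge> num_matchings EH k" for k
  proof -
    have "num_matchings EH k = card {P. P \<subseteq> X \<and> mt pa pb sgn P \<and> card P = k}"
      unfolding EH_eq match_count[OF injh] S_eqk ..
    moreover have "num_matchings (double_graph E) k = card {P. P \<subseteq> X \<and> mt pa pb (\<lambda>_. False) P \<and> card P = k}"
      unfolding DG_eq match_count[OF injh] S_eqk ..
    ultimately show ?thesis using count_le[OF finE, of pa pb sgn k] unfolding X_def by simp
  qed
  have part2: "(matching_poly E t)\<^sup>2 \<ge> matching_poly EH t" if t: "t \<ge> 0" for t :: real
  proof -
    define SE where "SE = {M. matching E M}"
    define GS where "GS = {P. P \<subseteq> X \<and> mt pa pb (\<lambda>_. False) P}"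
    have finEH: "finite EH" unfolding EH_eq using finX by simp
    have "matching_poly EH t = (\<Sum>M\<in>{M. matching EH M}. t ^ card M)" by (rule poly_as_sum[OF finEH])
    also have "\<dots> = (\<Sum>P\<in>{P. P \<subseteq> X \<and> mt pa pb sgn P}. t ^ card P)"
      unfolding EH_eq match_sum[OF injh] S_eq ..
    also have "\<dots> \<le> (\<Sum>P\<in>GS. t ^ card P)"
      using sum_le[OF finE t, of pa pb sgn] unfolding X_def GS_def .
    also have "\<dots> = (\<Sum>M\<in>SE. t ^ card M) ^ 2"
    proof -
      have mE: "matching E M \<longleftrightarrow> M \<subseteq> E \<and> (\<forall>e\<in>M. \<forall>e'\<in>M. e \<noteq> e' \<longrightarrow> pa e \<noteq> pa e' \<and> pb e \<noteq> pb e')" for M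
      proof -
        have "e \<inter> e' = {} \<longleftrightarrow> pa e \<noteq> pa e' \<and> pb e \<noteq> pb e'" if h1: "e \<in> E" and h2: "e' \<in> E" for e e'
        proof -
          have eq: "{pa e, pb e} = e" "{pa e', pb e'} = e'" using pab[OF h1] pab[OF h2] by auto
          have "pa e \<noteq> pb e'" "pa e' \<noteq> pb e" "pa e \<noteq> pb e" "pa e' \<noteq> pb e'" using pab_ne h1 h2 by auto
          then have "{pa e, pb e} \<inter> {pa e', pb e'} = {} \<longleftrightarrow> pa e \<noteq> pa e' \<and> pb e \<noteq> pb e'" by auto
          then show ?thesis unfolding eq .
        qed
        note ii = this
        show ?thesis
        proof
          assume "matching E M"
          then have M: "M \<subseteq> E" "\<forall>e\<in>M. \<forall>f\<in>M. e \<noteq> f \<longrightarrow> e \<inter> f = {}" unfolding matching_def by auto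
          have "\<forall>e\<in>M. \<forall>e'\<in>M. e \<noteq> e' \<longrightarrow> pa e \<noteq> pa e' \<and> pb e \<noteq> pb e'"
          proof (intro ballI impI)
            fix e e' assume h: "e \<in> M" "e' \<in> M" "e \<noteq> e'"
            then have "e \<inter> e' = {}" using M(2) by blast
            then show "pa e \<noteq> pa e' \<and> pb e \<noteq> pb e'" using ii[of e e'] h M(1) by blast
          qed
          then show "M \<subseteq> E \<and> (\<forall>e\<in>M. \<forall>e'\<in>M. e \<noteq> e' \<longrightarrow> pa e \<noteq> pa e' \<and> pb e \<noteq> pb e')" using M(1) by blast
        next
          assume M: "M \<subseteq> E \<and> (\<forall>e\<in>M. \<forall>e'\<in>M. e \<noteq> e' \<longrightarrow> pa e \<noteq> pa e' \<and> pb e \<noteq> pb e')"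
          have "\<forall>e\<in>M. \<forall>f\<in>M. e \<noteq> f \<longrightarrow> e \<inter> f = {}"
          proof (intro ballI impI)
            fix e e' assume h: "e \<in> M" "e' \<in> M" "e \<noteq> e'"
            then have "pa e \<noteq> pa e' \<and> pb e \<noteq> pb e'" using M by blast
            then show "e \<inter> e' = {}" using ii[of e e'] h M by blast
          qed
          then show "matching E M" unfolding matching_def using M by blast
        qed
      qed
      define phi :: "'a set set \<times> 'a set set \<Rightarrow> ('a set \<times> bool) set" where "phi = (\<lambda>(M1, M2). (\<lambda>e. (e, False)) ` M1 \<union> (\<lambda>e. (e, True)) ` M2)"
      define psi :: "('a set \<times> bool) set \<Rightarrow> 'a set set \<times> 'a set set" where "psi = (\<lambda>Q. ({e. (e,False) \<in> Q}, {e. (e,True) \<in> Q}))"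
      have bij: "bij_betw phi (SE \<times> SE) GS"
      proof (rule bij_betw_byWitness[where f' = psi])
        show "\<forall>a\<in>SE \<times> SE. psi (phi a) = a" unfolding phi_def psi_def by auto
        show "\<forall>a'\<in>GS. phi (psi a') = a'"
        proof
          fix Q assume "Q \<in> GS"
          show "phi (psi Q) = Q" unfolding phi_def psi_def
          proof (rule set_eqI)
            fix x :: "'a set \<times> bool" show "x \<in> (case ({e. (e, False) \<in> Q}, {e. (e, True) \<in> Q}) of (M1, M2) \<Rightarrow> (\<lambda>e. (e, False)) ` M1 \<union> (\<lambda>e. (e, True)) ` M2) \<longleftrightarrow> x \<in> Q"
              by (cases x; cases "snd x") auto
          qed
        qed
        show "phi ` (SE \<times> SE) \<subseteq> GS"
        proof
          fix Q assume "Q \<in> phi ` (SE \<times> SE)"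
          then obtain M1 M2 where M: "M1 \<in> SE" "M2 \<in> SE" "Q = phi (M1, M2)" by auto
          have "matching E M1" using M(1) unfolding SE_def by simp
          then have m1: "M1 \<subseteq> E" "\<forall>e\<in>M1. \<forall>e'\<in>M1. e \<noteq> e' \<longrightarrow> pa e \<noteq> pa e' \<and> pb e \<noteq> pb e'"
            unfolding mE[of M1] by blast+
          have "matching E M2" using M(2) unfolding SE_def by simp
          then have m2: "M2 \<subseteq> E" "\<forall>e\<in>M2. \<forall>e'\<in>M2. e \<noteq> e' \<longrightarrow> pa e \<noteq> pa e' \<and> pb e \<noteq> pb e'"
            unfolding mE[of M2] by blast+
          have memQ: "(e,b) \<in> Q \<longleftrightarrow> (if b then e \<in> M2 else e \<in> M1)" for e b
            unfolding M(3) phi_def by (cases b) auto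
          have "Q \<subseteq> X"
          proof
            fix x assume "x \<in> Q"
            moreover obtain e b where x: "x = (e,b)" by (cases x)
            ultimately have "if b then e \<in> M2 else e \<in> M1" using memQ by simp
            then have "e \<in> E" using m1(1) m2(1) by (cases b) auto
            then show "x \<in> X" unfolding X_def x by simp
          qed
          moreover have "mt pa pb (\<lambda>_. False) Q"
            unfolding mt_def
          proof (intro ballI impI)
            fix p q assume pq: "p \<in> Q" "q \<in> Q" "p \<noteq> q"
            obtain e i where p: "p = (e,i)" by (cases p)
            obtain e' j where q: "q = (e',j)" by (cases q)
            have ip: "if i then e \<in> M2 else e \<in> M1" using pq(1) memQ unfolding p by simp
            have jq: "if j then e' \<in> M2 else e' \<in> M1" using pq(2) memQ unfolding q by simp
            show "okp pa pb (\<lambda>_. False) p q"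
            proof (cases "i = j")
              case False
              then show ?thesis unfolding p q okp_def by auto
            next
              case True
              then have ne: "e \<noteq> e'" using pq(3) p q by auto
              have "pa e \<noteq> pa e' \<and> pb e \<noteq> pb e'"
              proof (cases i)
                case True
                then have "e \<in> M2" "e' \<in> M2" using ip jq \<open>i = j\<close> by auto
                then show ?thesis using m2(2) ne by blast
              next
                case False
                then have "e \<in> M1" "e' \<in> M1" using ip jq \<open>i = j\<close> by auto
                then show ?thesis using m1(2) ne by blast
              qed
              then show ?thesis unfolding p q okp_def by auto
            qed
          qed
          ultimately show "Q \<in> GS" unfolding GS_def by auto
        qed
        show "psi ` GS \<subseteq> SE \<times> SE"
        proof
          fix MM assume "MM \<in> psi ` GS"
          then obtain Q where Q: "Q \<in> GS" "MM = psi Q" by auto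
          have QX: "Q \<subseteq> X" and mQ: "mt pa pb (\<lambda>_. False) Q" using Q(1) unfolding GS_def by auto
          have "matching E {e. (e,b) \<in> Q}" for b
          proof -
            have s1: "{e. (e, b) \<in> Q} \<subseteq> E" using QX unfolding X_def by auto
            have s2: "\<forall>e\<in>{e. (e, b) \<in> Q}. \<forall>e'\<in>{e. (e, b) \<in> Q}. e \<noteq> e' \<longrightarrow> pa e \<noteq> pa e' \<and> pb e \<noteq> pb e'"
            proof (intro ballI impI)
              fix e e' assume h: "e \<in> {e. (e, b) \<in> Q}" "e' \<in> {e. (e, b) \<in> Q}" "e \<noteq> e'"
              have "okp pa pb (\<lambda>_. False) (e,b) (e',b)" using mtD[OF mQ] h by simp
              then show "pa e \<noteq> pa e' \<and> pb e \<noteq> pb e'" unfolding okp_def by auto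
            qed
            show ?thesis unfolding mE using s1 s2 by blast
          qed
          then show "MM \<in> SE \<times> SE" using Q(2) unfolding psi_def SE_def by auto
        qed
      qed
      have finSE: "finite SE" unfolding SE_def matching_def using finE
        by (metis (no_types, lifting) Collect_mono Pow_def finite_Pow_iff rev_finite_subset)
      have cphi: "card (phi (M1, M2)) = card M1 + card M2" if "M1 \<in> SE" "M2 \<in> SE" for M1 M2
      proof -
        have f1: "finite M1" "finite M2" using that finE unfolding SE_def matching_def
          by (auto intro: finite_subset)
        have "card (phi (M1,M2)) = card ((\<lambda>e. (e, False)) ` M1) + card ((\<lambda>e. (e, True)) ` M2)"
          unfolding phi_def prod.case by (rule card_Un_disjoint) (use f1 in auto)
        also have "\<dots> = card M1 + card M2" by (simp add: card_image inj_on_def)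
        finally show ?thesis .
      qed
      have "(\<Sum>P\<in>GS. t ^ card P) = (\<Sum>MM\<in>SE \<times> SE. t ^ card (phi MM))"
        using sum.reindex_bij_betw[OF bij, of "\<lambda>P. t ^ card P"] by simp
      also have "\<dots> = (\<Sum>MM\<in>SE \<times> SE. t ^ card (fst MM) * t ^ card (snd MM))"
        by (rule sum.cong) (auto simp: cphi power_add)
      also have "\<dots> = (\<Sum>M1\<in>SE. \<Sum>M2\<in>SE. t ^ card M1 * t ^ card M2)"
        by (simp add: sum.cartesian_product case_prod_beta)
      also have "\<dots> = (\<Sum>M\<in>SE. t ^ card M) * (\<Sum>M\<in>SE. t ^ card M)"
        by (simp add: sum_product)
      finally show ?thesis by (simp add: power2_eq_square)
    qed
    also have "\<dots> = (matching_poly E t)\<^sup>2" unfolding poly_as_sum[OF finE] SE_def ..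
    finally show ?thesis .
  qed
  show ?thesis using part1 part2 by blast
qed


end
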